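(* The space $\overline{ARI}_{circneut}$ of circ-neutral moulds in $\overline{ARI}$ is closed under the $\overline{ari}$-bracket, hence forms a Lie algebra under it.
   Context: $\overline{ARI}$ is the space of moulds $A=(A^r)_{r\ge0}$ with $A^r\in\mathbb{Q}(v_1,\dots,v_r)$ and $A^0=0$. $A$ is circ-neutral if $\sum_{i=0}^{r-1}A(v_{i+1},\dots,v_r,v_1,\dots,v_i)=0$ for all $r>1$. For $A,B\in\overline{ARI}$ and $w=(v_1,\dots,v_r)$: $mu(A,B)(w)=\sum_{i=0}^rA(v_1,\dots,v_i)B(v_{i+1},\dots,v_r)$, $lu(A,B)=mu(A,B)-mu(B,A)$; $(\overline{amit}(B)\cdot A)(w)=\sum_{0\le i<j<r}A(v_1,\dots,v_i,v_{j+1},\dots,v_r)B(v_{i+1}-v_{j+1},\dots,v_j-v_{j+1})$; $(\overline{anit}(B)\cdot A)(w)=\sum_{1\le i<j\le r}A(v_1,\dots,v_i,v_{j+1},\dots,v_r)B(v_{i+1}-v_i,\dots,v_j-v_i)$; $\overline{arit}(B)=\overline{amit}(B)-\overline{anit}(B)$; and $\overline{ari}(A,B)=\overline{arit}(B)\cdot A-\overline{arit}(A)\cdot B+lu(A,B)$. *)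

theory Defs
  imports Main
begin

text \<open>A mould is modelled as a function on finite sequences (lists) of variables:
  the component A^r is A restricted to lists of length r.  Variables range over an
  abelian group 'a (differences v_i - v_j are needed), values lie in a commutative ring 'b.\<close>

type_synonym ('a, 'b) mould = "'a list \<Rightarrow> 'b"

definition in_ARI :: "('a, 'b::zero) mould \<Rightarrow> bool" where
  "in_ARI A \<longleftrightarrow> A [] = 0"

definition circ_neutral :: "('a, 'b::comm_monoid_add) mould \<Rightarrow> bool" where
  "circ_neutral A \<longleftrightarrow> (\<forall>w. length w > 1 \<longrightarrow> (\<Sum>i<length w. A (rotate i w)) = 0)"

definition mu :: "('a, 'b::comm_ring_1) mould \<Rightarrow> ('a, 'b) mould \<Rightarrow> ('a, 'b) mould" where
  "mu A B w = (\<Sum>i\<le>length w. A (take i w) * B (drop i w))"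

definition lu :: "('a, 'b::comm_ring_1) mould \<Rightarrow> ('a, 'b) mould \<Rightarrow> ('a, 'b) mould" where
  "lu A B w = mu A B w - mu B A w"

text \<open>(amit(B).A)(w) = sum_{0<=i<j<r} A(v1..vi, v_{j+1}..vr) B(v_{i+1}-v_{j+1},..,v_j-v_{j+1});
  with 0-based list indexing v_{j+1} = w ! j.\<close>
definition amit :: "('a::ab_group_add, 'b::comm_ring_1) mould \<Rightarrow> ('a, 'b) mould \<Rightarrow> ('a, 'b) mould" where
  "amit B A w = (\<Sum>j<length w. \<Sum>i<j.
      A (take i w @ drop j w) * B (map (\<lambda>x. x - w ! j) (take (j - i) (drop i w))))"

text \<open>(anit(B).A)(w) = sum_{1<=i<j<=r} A(v1..vi, v_{j+1}..vr) B(v_{i+1}-v_i,..,v_j-v_i);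
  with 0-based list indexing v_i = w ! (i - 1).\<close>
definition anit :: "('a::ab_group_add, 'b::comm_ring_1) mould \<Rightarrow> ('a, 'b) mould \<Rightarrow> ('a, 'b) mould" where
  "anit B A w = (\<Sum>j\<in>{1..length w}. \<Sum>i\<in>{1..<j}.
      A (take i w @ drop j w) * B (map (\<lambda>x. x - w ! (i - 1)) (take (j - i) (drop i w))))"

definition arit :: "('a::ab_group_add, 'b::comm_ring_1) mould \<Rightarrow> ('a, 'b) mould \<Rightarrow> ('a, 'b) mould" where
  "arit B A w = amit B A w - anit B A w"

definition ari :: "('a::ab_group_add, 'b::comm_ring_1) mould \<Rightarrow> ('a, 'b) mould \<Rightarrow> ('a, 'b) mould" where
  "ari A B w = arit B A w - arit A B w + lu A B w"

end

theory Submission imports Defs begin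

definition seg :: "'a list \<Rightarrow> nat \<Rightarrow> nat \<Rightarrow> 'a list" where
  "seg w q n = map (\<lambda>t. w ! ((q+t) mod length w)) [0..<n]"

lemma length_seg[simp]: "length (seg w q n) = n" by (simp add: seg_def)
lemma nth_seg[simp]: "t < n \<Longrightarrow> seg w q n ! t = w ! ((q+t) mod length w)" by (simp add: seg_def)
lemma seg_0[simp]: "seg w q 0 = []" by (simp add: seg_def)

lemma seg_cong_mod: "q mod length w = q' mod length w \<Longrightarrow> seg w q n = seg w q' n"
  unfolding seg_def by (intro map_cong refl) (metis mod_add_left_eq)

lemma seg_add_len[simp]: "seg w (q + length w) n = seg w q n"
  by (rule seg_cong_mod) simp

lemma rotate_seg: "rotate k w = seg w k (length w)"
  by (rule nth_equalityI) (auto simp: nth_rotate add.commute)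

lemma take_seg: "i \<le> n \<Longrightarrow> take i (seg w q n) = seg w q i"
  by (rule nth_equalityI) auto

lemma drop_seg: "i \<le> n \<Longrightarrow> drop i (seg w q n) = seg w (q+i) (n-i)"
  by (rule nth_equalityI) (auto simp: add.assoc)

lemma rotate_le: "m \<le> length xs \<Longrightarrow> rotate m xs = drop m xs @ take m xs"
proof (cases "m = length xs")
  case True then show ?thesis by simp
next
  case False
  assume "m \<le> length xs"
  with False have "m mod length xs = m" by simp
  then show ?thesis by (simp add: rotate_drop_take)
qed

lemma sum_shift_one:
  fixes G :: "nat \<Rightarrow> 'b::comm_monoid_add"
  assumes "\<And>x. G (x + r) = G x"
  shows "(\<Sum>k<r. G (k+1)) = (\<Sum>k<r. G k)"
proof (cases r)
  case 0 then show ?thesis by simp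
next
  case (Suc s)
  have "(\<Sum>k<r. G (k+1)) = (\<Sum>k<s. G (Suc k)) + G r" using Suc by simp
  also have "\<dots> = G 0 + (\<Sum>k<s. G (Suc k))" using assms[of 0] by (simp add: add.commute)
  also have "\<dots> = (\<Sum>k<Suc s. G k)" by (rule sum.lessThan_Suc_shift[symmetric])
  finally show ?thesis using Suc by simp
qed

lemma sum_shift:
  fixes G :: "nat \<Rightarrow> 'b::comm_monoid_add"
  assumes "\<And>x. G (x + r) = G x"
  shows "(\<Sum>k<r. G (k+i)) = (\<Sum>k<r. G k)"
proof (induction i)
  case 0 then show ?case by simp
next
  case (Suc i)
  define H where "H x = G (x+i)" for x
  have "(\<Sum>k<r. G (k + Suc i)) = (\<Sum>k<r. H (k+1))" by (simp add: H_def ac_simps)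
  also have "\<dots> = (\<Sum>k<r. H k)"
    by (rule sum_shift_one) (simp add: H_def, metis assms add.assoc add.commute)
  also have "\<dots> = (\<Sum>k<r. G (k+i))" by (simp add: H_def)
  finally show ?case using Suc by simp
qed

lemma pair_reindex1:
  fixes r :: nat
  shows   "(\<Sum>j<r. \<Sum>i<j. f i j) = (\<Sum>l\<in>{1..<r}. \<Sum>i<r-l. f i (i+l))"
proof -
  have "(\<Sum>j<r. \<Sum>i<j. f i j) = (\<Sum>(j,i)\<in>(SIGMA j:{..<r}. {..<j}). f i j)"
    using sum.Sigma[of "{..<r}" "\<lambda>j. {..<j}" "\<lambda>j i. f i j"] by simp
  also have "\<dots> = (\<Sum>(l,i)\<in>(SIGMA l:{1..<r}. {..<r-l}). f i (i+l))"
    by (rule sum.reindex_bij_witness[where i="\<lambda>(l,i). (i+l, i)" and j="\<lambda>(j,i). (j-i, i)"]) auto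
  also have "\<dots> = (\<Sum>l\<in>{1..<r}. \<Sum>i<r-l. f i (i+l))"
    using sum.Sigma[of "{1..<r}" "\<lambda>l. {..<r-l}" "\<lambda>l i. f i (i+l)"] by simp
  finally show ?thesis .
qed

lemma pair_reindex2:
  fixes r :: nat
  shows   "(\<Sum>j\<in>{1..r}. \<Sum>i\<in>{1..<j}. f i j) = (\<Sum>l\<in>{1..<r}. \<Sum>i\<in>{1..r-l}. f i (i+l))"
proof -
  have "(\<Sum>j\<in>{1..r}. \<Sum>i\<in>{1..<j}. f i j) = (\<Sum>(j,i)\<in>(SIGMA j:{1..r}. {1..<j}). f i j)"
    using sum.Sigma[of "{1..r}" "\<lambda>j. {1..<j}" "\<lambda>j i. f i j"] by simp
  also have "\<dots> = (\<Sum>(l,i)\<in>(SIGMA l:{1..<r}. {1..r-l}). f i (i+l))"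
    by (rule sum.reindex_bij_witness[where i="\<lambda>(l,i). (i+l, i)" and j="\<lambda>(j,i). (j-i, i)"]) auto
  also have "\<dots> = (\<Sum>l\<in>{1..<r}. \<Sum>i\<in>{1..r-l}. f i (i+l))"
    using sum.Sigma[of "{1..<r}" "\<lambda>l. {1..r-l}" "\<lambda>l i. f i (i+l)"] by simp
  finally show ?thesis .
qed


lemma seg_add_len'[simp]: "seg w (length w + q) n = seg w q n"
  by (rule seg_cong_mod) simp

lemma amit_rot_sum:
  fixes A B :: "('a::ab_group_add,'b::comm_ring_1) mould" and w :: "'a list"
  assumes r: "r = length w"
  shows "(\<Sum>k<r. amit B A (rotate k w)) =
    (\<Sum>l\<in>{1..<r}. \<Sum>p<r. B (map (\<lambda>x. x - w!((p+l) mod r)) (seg w p l)) *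
        (\<Sum>i<r-l. A (rotate (r-l-i) (seg w (p+l) (r-l)))))"
proof -
  define T where "T k l i = A (seg w k i @ seg w (k+(i+l)) (r-(i+l))) *
        B (map (\<lambda>x. x - w!((k+(i+l)) mod r)) (seg w (k+i) l))" for k l i
  define G where "G l i p = A (rotate (r-l-i) (seg w (p+l) (r-l))) *
        B (map (\<lambda>x. x - w!((p+l) mod r)) (seg w p l))" for l i p
  have step1: "amit B A (rotate k w) = (\<Sum>l\<in>{1..<r}. \<Sum>i<r-l. T k l i)" for k
  proof -
    have "amit B A (rotate k w) = (\<Sum>j<r. \<Sum>i<j. A (take i (seg w k r) @ drop j (seg w k r)) *
        B (map (\<lambda>x. x - seg w k r ! j) (take (j - i) (drop i (seg w k r)))))"
      unfolding amit_def by (simp add: r rotate_seg)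
    also have "\<dots> = (\<Sum>l\<in>{1..<r}. \<Sum>i<r-l. A (take i (seg w k r) @ drop (i+l) (seg w k r)) *
        B (map (\<lambda>x. x - seg w k r ! (i+l)) (take (i+l - i) (drop i (seg w k r)))))"
      by (rule pair_reindex1)
    also have "\<dots> = (\<Sum>l\<in>{1..<r}. \<Sum>i<r-l. T k l i)"
      by (intro sum.cong refl) (simp add: T_def take_seg drop_seg r)
    finally show ?thesis .
  qed
  have step2: "(\<Sum>k<r. T k l i) = (\<Sum>p<r. G l i p)" if "l < r" "i < r - l" for l i
  proof -
    have "T k l i = G l i (k+i)" for k
    proof -
      have "rotate (r-l-i) (seg w (k+i+l) (r-l)) = seg w (k+i+l+(r-l-i)) (r-l-(r-l-i)) @ seg w (k+i+l) (r-l-i)"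
        using that by (simp add: rotate_le drop_seg take_seg)
      also have "k+i+l+(r-l-i) = length w + k" using that r by simp
      also have "r-l-(r-l-i) = i" using that by simp
      finally show ?thesis by (simp add: T_def G_def ac_simps r)
    qed
    then have "(\<Sum>k<r. T k l i) = (\<Sum>k<r. G l i (k+i))" by simp
    also have "\<dots> = (\<Sum>p<r. G l i p)"
    proof (rule sum_shift)
      fix x
      have "seg w (x + r + l) (r-l) = seg w (x+l) (r-l)"
        using seg_add_len'[of w "x+l"] by (simp add: r ac_simps)
      moreover have "seg w (x + r) l = seg w x l" using r by simp
      moreover have "(x + r + l) mod r = (x + l) mod r"
        by (metis add.commute add.left_commute mod_add_self2)
      ultimately show "G l i (x + r) = G l i x" by (simp add: G_def)
    qed
    finally show ?thesis .
  qed
  have "(\<Sum>k<r. amit B A (rotate k w)) = (\<Sum>k<r. \<Sum>l\<in>{1..<r}. \<Sum>i<r-l. T k l i)"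
    by (simp add: step1)
  also have "\<dots> = (\<Sum>l\<in>{1..<r}. \<Sum>i<r-l. \<Sum>k<r. T k l i)"
    by (simp add: sum.swap[of _ "{..<r}"] sum.swap[of _ "{..<r}" "{..<_}"])
  also have "\<dots> = (\<Sum>l\<in>{1..<r}. \<Sum>i<r-l. \<Sum>p<r. G l i p)"
    by (intro sum.cong refl step2) auto
  also have "\<dots> = (\<Sum>l\<in>{1..<r}. \<Sum>p<r. \<Sum>i<r-l. G l i p)"
    by (simp add: sum.swap[of _ "{..<_ - _}"])
  finally show ?thesis by (simp add: G_def sum_distrib_left mult.commute)
qed


lemma anit_rot_sum:
  fixes A B :: "('a::ab_group_add,'b::comm_ring_1) mould" and w :: "'a list"
  assumes r: "r = length w"
  shows "(\<Sum>k<r. anit B A (rotate k w)) =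
    (\<Sum>l\<in>{1..<r}. \<Sum>p<r. B (map (\<lambda>x. x - w!((p+(r-1)) mod r)) (seg w p l)) *
        (\<Sum>i\<in>{1..r-l}. A (rotate (r-l-i) (seg w (p+l) (r-l)))))"
proof -
  define T where "T k l i = A (seg w k i @ seg w (k+(i+l)) (r-(i+l))) *
        B (map (\<lambda>x. x - w!((k+(i-1)) mod r)) (seg w (k+i) l))" for k l i
  define G where "G l i p = A (rotate (r-l-i) (seg w (p+l) (r-l))) *
        B (map (\<lambda>x. x - w!((p+(r-1)) mod r)) (seg w p l))" for l i p
  have step1: "anit B A (rotate k w) = (\<Sum>l\<in>{1..<r}. \<Sum>i\<in>{1..r-l}. T k l i)" for k
  proof -
    have "anit B A (rotate k w) = (\<Sum>j\<in>{1..r}. \<Sum>i\<in>{1..<j}. A (take i (seg w k r) @ drop j (seg w k r)) *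
        B (map (\<lambda>x. x - seg w k r ! (i-1)) (take (j - i) (drop i (seg w k r)))))"
      unfolding anit_def by (simp add: r rotate_seg)
    also have "\<dots> = (\<Sum>l\<in>{1..<r}. \<Sum>i\<in>{1..r-l}. A (take i (seg w k r) @ drop (i+l) (seg w k r)) *
        B (map (\<lambda>x. x - seg w k r ! (i-1)) (take (i+l - i) (drop i (seg w k r)))))"
      by (rule pair_reindex2)
    also have "\<dots> = (\<Sum>l\<in>{1..<r}. \<Sum>i\<in>{1..r-l}. T k l i)"
    proof (intro sum.cong refl)
      fix l i assume l: "l \<in> {1..<r}" and i: "i \<in> {1..r-l}"
      then have i1: "i - 1 < r" "i \<le> r" "i + l \<le> r" "l \<le> r - i" by auto
      have e: "seg w k r ! (i-1) = w ! ((k+(i-1)) mod r)" using i1 r by simp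
      show "A (take i (seg w k r) @ drop (i+l) (seg w k r)) *
        B (map (\<lambda>x. x - seg w k r ! (i-1)) (take (i+l - i) (drop i (seg w k r)))) = T k l i"
        unfolding e T_def using i1 by (simp add: take_seg drop_seg)
    qed
    finally show ?thesis .
  qed
  have step2: "(\<Sum>k<r. T k l i) = (\<Sum>p<r. G l i p)" if "l < r" "1 \<le> i" "i \<le> r - l" for l i
  proof -
    have "T k l i = G l i (k+i)" for k
    proof -
      have "rotate (r-l-i) (seg w (k+i+l) (r-l)) = seg w (k+i+l+(r-l-i)) (r-l-(r-l-i)) @ seg w (k+i+l) (r-l-i)"
        using that by (simp add: rotate_le drop_seg take_seg)
      also have "k+i+l+(r-l-i) = length w + k" using that r by simp
      also have "r-l-(r-l-i) = i" using that by simp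
      finally have e1: "rotate (r-l-i) (seg w (k+i+l) (r-l)) = seg w k i @ seg w (k+i+l) (r-l-i)" by simp
      have "k+i+(r-1) = (k+(i-1)) + r" using that by simp
      then have e2: "(k+i+(r-1)) mod r = (k+(i-1)) mod r" by (metis mod_add_self2)
      show ?thesis using e1 e2 by (simp add: T_def G_def ac_simps)
    qed
    then have "(\<Sum>k<r. T k l i) = (\<Sum>k<r. G l i (k+i))" by simp
    also have "\<dots> = (\<Sum>p<r. G l i p)"
    proof (rule sum_shift)
      fix x
      have "seg w (x + r + l) (r-l) = seg w (x+l) (r-l)"
        using seg_add_len'[of w "x+l"] by (simp add: r ac_simps)
      moreover have "seg w (x + r) l = seg w x l" using r by simp
      moreover have "(x + r + (r-1)) mod r = (x + (r-1)) mod r"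
        by (metis add.commute add.left_commute mod_add_self2)
      ultimately show "G l i (x + r) = G l i x" by (simp add: G_def)
    qed
    finally show ?thesis .
  qed
  have "(\<Sum>k<r. anit B A (rotate k w)) = (\<Sum>k<r. \<Sum>l\<in>{1..<r}. \<Sum>i\<in>{1..r-l}. T k l i)"
    by (simp add: step1)
  also have "\<dots> = (\<Sum>l\<in>{1..<r}. \<Sum>i\<in>{1..r-l}. \<Sum>k<r. T k l i)"
    by (simp add: sum.swap[of _ "{..<r}"] sum.swap[of _ "{..<r}" "{1.._}"])
  also have "\<dots> = (\<Sum>l\<in>{1..<r}. \<Sum>i\<in>{1..r-l}. \<Sum>p<r. G l i p)"
    by (intro sum.cong refl step2) auto
  also have "\<dots> = (\<Sum>l\<in>{1..<r}. \<Sum>p<r. \<Sum>i\<in>{1..r-l}. G l i p)"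
    by (rule sum.cong[OF refl]) (rule sum.swap)
  also have "\<dots> = (\<Sum>l\<in>{1..<r}. \<Sum>p<r. B (map (\<lambda>x. x - w!((p+(r-1)) mod r)) (seg w p l)) *
        (\<Sum>i\<in>{1..r-l}. A (rotate (r-l-i) (seg w (p+l) (r-l)))))"
    unfolding G_def sum_distrib_left by (rule sum.cong[OF refl], rule sum.cong[OF refl], rule sum.cong[OF refl], rule mult.commute)
  finally show ?thesis .
qed

lemma rev_sum1:
  fixes h :: "nat \<Rightarrow> 'b::comm_monoid_add"
  shows "(\<Sum>i\<in>{1..n}. h (n-i)) = (\<Sum>m<n. h m)"
  by (rule sum.reindex_bij_witness[where i="\<lambda>m. n - m" and j="\<lambda>i. n - i"]) auto

lemma rev_sum2:
  fixes h :: "nat \<Rightarrow> 'b::comm_monoid_add"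
  assumes "\<And>x. h (x + n) = h x"
  shows "(\<Sum>i<n. h (n-i)) = (\<Sum>m<n. h m)"
proof -
  have "(\<Sum>i<n. h (n-i)) = (\<Sum>m<n. h (m+1))"
    by (rule sum.reindex_bij_witness[where i="\<lambda>m. n - 1 - m" and j="\<lambda>i. n - 1 - i"]) (auto simp: Suc_diff_Suc)
  also have "\<dots> = (\<Sum>m<n. h m)" by (rule sum_shift_one) (rule assms)
  finally show ?thesis .
qed

lemma circ_zero:
  assumes "circ_neutral A" "length c = n" "n > 1"
  shows "(\<Sum>m<n. A (rotate m c)) = 0"
  using assms unfolding circ_neutral_def by auto

lemma amit_anit_eq:
  fixes A B :: "('a::ab_group_add,'b::comm_ring_1) mould" and w :: "'a list"
  assumes r: "r = length w" and cA: "circ_neutral A"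
  shows "(\<Sum>k<r. amit B A (rotate k w)) = (\<Sum>k<r. anit B A (rotate k w))"
proof -
  have key: "B (map (\<lambda>x. x - w!((p+l) mod r)) (seg w p l)) *
        (\<Sum>i<r-l. A (rotate (r-l-i) (seg w (p+l) (r-l)))) =
      B (map (\<lambda>x. x - w!((p+(r-1)) mod r)) (seg w p l)) *
        (\<Sum>i\<in>{1..r-l}. A (rotate (r-l-i) (seg w (p+l) (r-l))))"
    if l: "l \<in> {1..<r}" for l p
  proof -
    define c where "c = seg w (p+l) (r-l)"
    define S where "S = (\<Sum>m<r-l. A (rotate m c))"
    have lc: "length c = r - l" by (simp add: c_def)
    have s1: "(\<Sum>i<r-l. A (rotate (r-l-i) c)) = S"
      unfolding S_def by (rule rev_sum2[where h="\<lambda>m. A (rotate m c)"]) (metis lc mod_add_self2 rotate_conv_mod)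
    have s2: "(\<Sum>i\<in>{1..r-l}. A (rotate (r-l-i) c)) = S"
      unfolding S_def by (rule rev_sum1)
    show ?thesis
    proof (cases "r - l > 1")
      case True
      have "S = 0" unfolding S_def by (rule circ_zero[OF cA lc True])
      then show ?thesis unfolding c_def[symmetric] s1 s2 by simp
    next
      case False
      with l have "l = r - 1" by auto
      then have "(p+l) mod r = (p+(r-1)) mod r" by simp
      then show ?thesis unfolding c_def[symmetric] s1 s2 by simp
    qed
  qed
  show ?thesis unfolding amit_rot_sum[OF r] anit_rot_sum[OF r]
    by (rule sum.cong[OF refl], rule sum.cong[OF refl], rule key)
qed


lemma mu_rot:
  fixes X Y :: "('a::ab_group_add,'b::comm_ring_1) mould"
  assumes r: "r = length w"
  shows "mu X Y (rotate k w) = (\<Sum>i\<le>r. X (seg w k i) * Y (seg w (k+i) (r-i)))"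
  unfolding mu_def using r by (intro sum.cong) (auto simp: rotate_seg take_seg drop_seg)

lemma mu_rot_sum:
  fixes A B :: "('a::ab_group_add,'b::comm_ring_1) mould"
  assumes r: "r = length w"
  shows "(\<Sum>k<r. mu A B (rotate k w)) = (\<Sum>k<r. mu B A (rotate k w))"
proof -
  define H where "H i k = B (seg w k (r-i)) * A (seg w (k+(r-i)) i)" for i k
  have sh: "(\<Sum>k<r. H i k) = (\<Sum>k<r. A (seg w k i) * B (seg w (k+i) (r-i)))" if "i \<le> r" for i
  proof -
    have "(\<Sum>k<r. H i k) = (\<Sum>k<r. H i (k+i))"
    proof (rule sum_shift[symmetric])
      fix x
      have "seg w (x + r + (r - i)) i = seg w (x + (r-i)) i"
        using seg_add_len'[of w "x+(r-i)"] by (simp add: r ac_simps)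
      then show "H i (x + r) = H i x" using r by (simp add: H_def)
    qed
    also have "\<dots> = (\<Sum>k<r. A (seg w k i) * B (seg w (k+i) (r-i)))"
    proof (rule sum.cong[OF refl])
      fix k
      have eq: "k + i + (r - i) = length w + k" using that r by simp
      have e: "seg w (k+i+(r-i)) i = seg w k i" unfolding eq by (rule seg_add_len')
      show "H i (k+i) = A (seg w k i) * B (seg w (k+i) (r-i))"
        by (simp add: H_def e mult.commute)
    qed
    finally show ?thesis .
  qed
  have "(\<Sum>k<r. mu B A (rotate k w)) = (\<Sum>k<r. \<Sum>i\<le>r. B (seg w k i) * A (seg w (k+i) (r-i)))"
    by (simp add: mu_rot[OF r])
  also have "\<dots> = (\<Sum>i\<le>r. \<Sum>k<r. B (seg w k i) * A (seg w (k+i) (r-i)))"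
    by (rule sum.swap)
  also have "\<dots> = (\<Sum>i\<le>r. \<Sum>k<r. H i k)"
    unfolding H_def
    by (rule sum.reindex_bij_witness[where i="\<lambda>i. r - i" and j="\<lambda>i. r - i"]) auto
  also have "\<dots> = (\<Sum>i\<le>r. \<Sum>k<r. A (seg w k i) * B (seg w (k+i) (r-i)))"
    by (rule sum.cong[OF refl]) (rule sh, simp)
  also have "\<dots> = (\<Sum>k<r. \<Sum>i\<le>r. A (seg w k i) * B (seg w (k+i) (r-i)))"
    by (rule sum.swap)
  also have "\<dots> = (\<Sum>k<r. mu A B (rotate k w))"
    by (simp add: mu_rot[OF r])
  finally show ?thesis by simp
qed

theorem lemma21:
  fixes A B :: "('a::ab_group_add, 'b::comm_ring_1) mould"
  assumes "in_ARI A" and "in_ARI B"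
    and "circ_neutral A" and "circ_neutral B"
  shows "in_ARI (ari A B) \<and> circ_neutral (ari A B)"
proof
  show "in_ARI (ari A B)"
    using assms(1,2) by (simp add: in_ARI_def ari_def arit_def amit_def anit_def lu_def mu_def)
  show "circ_neutral (ari A B)"
    unfolding circ_neutral_def
  proof (intro allI impI)
    fix w :: "'a list"
    define r where "r = length w"
    have "(\<Sum>i<r. ari A B (rotate i w)) =
       ((\<Sum>i<r. amit B A (rotate i w)) - (\<Sum>i<r. anit B A (rotate i w)))
     - ((\<Sum>i<r. amit A B (rotate i w)) - (\<Sum>i<r. anit A B (rotate i w)))
     + ((\<Sum>i<r. mu A B (rotate i w)) - (\<Sum>i<r. mu B A (rotate i w)))"
      by (simp add: ari_def arit_def lu_def sum_subtractf sum.distrib)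
    also have "\<dots> = 0"
      using amit_anit_eq[OF r_def assms(3), of B] amit_anit_eq[OF r_def assms(4), of A]
        mu_rot_sum[OF r_def, of A B] by simp
    finally show "(\<Sum>i<length w. ari A B (rotate i w)) = 0" by (simp add: r_def)
  qed
qed

end
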